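(* Fix $\lambda \geqslant 0$ and let $g(\lambda) = (1-e^{-\lambda})/\lambda$ for $\lambda>0$, $g(0)=1$. For a compactly supported Borel probability measure $\rho$ on $\mathbb R$ with $\operatorname{supp}\rho \subset [0,+\infty)$ and $\langle \rho, x\rangle = \int x\,d\rho(x) \neq 0$, define the measure $$A(\rho) = \left(1 - g(\lambda) + g(\lambda)\frac{x}{\langle \rho, x\rangle}\right)\rho,$$ i.e. the measure with density $x \mapsto 1 - g(\lambda) + g(\lambda)x/\langle\rho,x\rangle$ with respect to $\rho$. Let $\rho_0$ be such a measure, let $\rho_t = A^t(\rho_0)$ for $t\in\mathbb N$, and let $x_0 = \sup\operatorname{supp}\rho_0$. Then $\rho_t \to \delta_{x_0}$ as $t \to +\infty$, in the sense that $\int\phi\,d\rho_t \to \phi(x_0)$ for every continuous compactly supported function $\phi\colon\mathbb R\to\mathbb R$.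
   Context: $\delta_a$ denotes the Dirac measure at $a$. Convergence of measures is the weak (vague) convergence against continuous compactly supported test functions. *)

theory Defs
  imports "HOL-Probability.Probability"
begin

definition gfun :: "real \<Rightarrow> real" where
  "gfun lam = (if lam = 0 then 1 else (1 - exp (- lam)) / lam)"

definition msupp :: "real measure \<Rightarrow> real set" where
  "msupp M = {x. \<forall>e>0. emeasure M (ball x e) > 0}"

definition mean :: "real measure \<Rightarrow> real" where
  "mean M = (\<integral>x. x \<partial>M)"

definition Aop :: "real \<Rightarrow> real measure \<Rightarrow> real measure" where
  "Aop lam M = density M (\<lambda>x. ennreal (1 - gfun lam + gfun lam * x / mean M))"

end

theory Submission
  imports Defs
begin


lemma gfun_pos: "0 \<le> lam \<Longrightarrow> 0 < gfun lam"
  by (auto simp: gfun_def divide_pos_pos)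

lemma gfun_le1: "0 \<le> lam \<Longrightarrow> gfun lam \<le> 1"
proof -
  assume l: "0 \<le> lam"
  show ?thesis
  proof (cases "lam = 0")
    case False
    have "1 - lam \<le> exp (- lam)" using exp_ge_add_one_self[of "-lam"] by simp
    then show ?thesis using False l by (simp add: gfun_def divide_le_eq)
  qed (simp add: gfun_def)
qed

lemma step:
  fixes N :: "real measure" and b lam :: real
  defines "c \<equiv> \<lambda>x. 1 - gfun lam + gfun lam * x / mean N"
  assumes P: "prob_space N" and S: "sets N = sets borel"
    and AE: "AE x in N. 0 \<le> x \<and> x \<le> b" and mp: "mean N > 0"
    and g0: "0 < gfun lam" and g1: "gfun lam \<le> 1"
  shows "sets (Aop lam N) = sets borel"
    and "\<And>f::real\<Rightarrow>real. f \<in> borel_measurable borel \<Longrightarrow> integral\<^sup>L (Aop lam N) f = (\<integral>x. c x * f x \<partial>N)"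
    and "prob_space (Aop lam N)"
    and "AE x in Aop lam N. 0 \<le> x \<and> x \<le> b"
    and "mean N \<le> mean (Aop lam N)"
proof -
  interpret prob_space N by fact
  have meq: "measurable N = measurable borel" by (rule ext, rule measurable_cong_sets[OF S refl])
  have cm: "c \<in> borel_measurable N" unfolding meq c_def by measurable
  have cnn: "AE x in N. 0 \<le> c x"
    using AE proof eventually_elim
    case (elim x) then show ?case using g0 g1 mp by (simp add: c_def)
  qed
  have Adef: "Aop lam N = density N c" unfolding Aop_def c_def ..
  show SA: "sets (Aop lam N) = sets borel" unfolding Adef using S by simp
  show intA: "integral\<^sup>L (Aop lam N) f = (\<integral>x. c x * f x \<partial>N)" if f: "f \<in> borel_measurable borel" for f :: "real \<Rightarrow> real"
    unfolding Adef using f cm cnn by (subst integral_density) (auto simp: meq)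
  have intb: "integrable N f" if "f \<in> borel_measurable borel" "AE x in N. \<bar>f x\<bar> \<le> B" for f :: "real \<Rightarrow> real" and B
    using that by (intro integrable_const_bound[where B=B]) (auto simp: meq)
  have ix: "integrable N (\<lambda>x. x)" by (rule intb[of _ b]) (use AE in auto)
  have ixx: "integrable N (\<lambda>x. x * x)" proof (rule intb[of _ "b*b"])
    show "AE x in N. \<bar>x * x\<bar> \<le> b * b" using AE
    proof eventually_elim
      case (elim x) then show ?case by (simp add: abs_mult mult_mono)
    qed
  qed simp
  have ic: "integrable N c" unfolding c_def using ix by auto
  have intc: "integral\<^sup>L N c = 1"
    unfolding c_def using ix mp by (simp add: mean_def prob_space)
  show "prob_space (Aop lam N)"
  proof
    have "emeasure (Aop lam N) (space (Aop lam N)) = (\<integral>\<^sup>+ x. c x \<partial>N)"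
      unfolding Adef using cm by (simp add: emeasure_density nn_integral_set_ennreal)
    also have "\<dots> = 1" using nn_integral_eq_integral[OF ic cnn] intc by simp
    finally show "emeasure (Aop lam N) (space (Aop lam N)) = 1" .
  qed
  show "AE x in Aop lam N. 0 \<le> x \<and> x \<le> b"
    unfolding Adef using cm AE by (subst AE_density) auto
  have "mean (Aop lam N) = (\<integral>x. c x * x \<partial>N)" unfolding mean_def by (rule intA) simp
  also have "\<dots> = (1 - gfun lam) * mean N + gfun lam / mean N * (\<integral>x. x * x \<partial>N)"
  proof -
    have "(\<integral>x. c x * x \<partial>N) = (\<integral>x. (1 - gfun lam) * x + gfun lam / mean N * (x * x) \<partial>N)"
      unfolding c_def by (rule Bochner_Integration.integral_cong) (auto simp: field_simps)
    also have "\<dots> = (1 - gfun lam) * (\<integral>x. x \<partial>N) + gfun lam / mean N * (\<integral>x. x * x \<partial>N)"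
      using ix ixx Bochner_Integration.integral_add[of N "\<lambda>x. (1 - gfun lam) * x" "\<lambda>x. gfun lam / mean N * (x * x)"] by simp
    finally show ?thesis by (simp add: mean_def)
  qed
  finally have meq2: "mean (Aop lam N) = (1 - gfun lam) * mean N + gfun lam / mean N * (\<integral>x. x * x \<partial>N)" .
  have "0 \<le> (\<integral>x. (x - mean N) * (x - mean N) \<partial>N)" by (rule integral_nonneg_AE) auto
  also have "\<dots> = (\<integral>x. x * x \<partial>N) - mean N * mean N"
    using ix ixx by (simp add: algebra_simps mean_def prob_space)
  finally have "mean N * mean N \<le> (\<integral>x. x * x \<partial>N)" by simp
  then have "mean N \<le> (\<integral>x. x * x \<partial>N) / mean N" using mp by (simp add: le_divide_eq)
  then have "gfun lam * mean N \<le> gfun lam / mean N * (\<integral>x. x * x \<partial>N)"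
    using g0 mult_left_mono[of "mean N" "(\<integral>x. x * x \<partial>N) / mean N" "gfun lam"] by simp
  then show "mean N \<le> mean (Aop lam N)" unfolding meq2 by (simp add: algebra_simps)
qed



lemma null_compact:
  fixes M :: "real measure"
  assumes S: "sets M = sets borel" and K: "compact K" and D: "K \<inter> msupp M = {}"
  shows "K \<in> null_sets M"
proof -
  have "\<forall>x\<in>K. \<exists>e>0. emeasure M (ball x e) = 0"
  proof
    fix x assume "x \<in> K"
    then have "x \<notin> msupp M" using D by auto
    then obtain e where "e > 0" "\<not> emeasure M (ball x e) > 0" unfolding msupp_def by auto
    then show "\<exists>e>0. emeasure M (ball x e) = 0" by (auto simp: zero_less_iff_neq_zero)
  qed
  then obtain e where e: "\<And>x. x \<in> K \<Longrightarrow> e x > 0 \<and> emeasure M (ball x (e x)) = 0" by metis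
  have "K \<subseteq> (\<Union>x\<in>K. ball x (e x))" using e by auto
  then obtain C where C: "C \<subseteq> K" "finite C" "K \<subseteq> (\<Union>x\<in>C. ball x (e x))"
    using compactE_image[OF K, of K "\<lambda>x. ball x (e x)"] by (metis open_ball)
  have "(\<Union>x\<in>C. ball x (e x)) \<in> null_sets M"
  proof (rule null_sets_UN')
    show "countable C" using C by (simp add: countable_finite)
    fix x assume "x \<in> C"
    then show "ball x (e x) \<in> null_sets M" using e C S by (auto simp: null_sets_def)
  qed
  moreover have "K \<in> sets M" using S K by (simp add: compact_imp_closed)
  ultimately show ?thesis using C(3) null_sets_subset by blast
qed

lemma supp_nonempty:
  fixes M :: "real measure"
  assumes P: "prob_space M" and S: "sets M = sets borel"
  shows "msupp M \<noteq> {}"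
proof
  assume E: "msupp M = {}"
  have "(\<Union>n::nat. {- real n..real n}) \<in> null_sets M"
  proof (rule null_sets_UN)
    fix n :: nat show "{- real n..real n} \<in> null_sets M"
      using null_compact[OF S, of "{- real n..real n}"] E by simp
  qed
  moreover have "(\<Union>n::nat. {- real n..real n}) = UNIV"
  proof (rule set_eqI)
    fix x :: real
    obtain n :: nat where "\<bar>x\<bar> \<le> real n" using real_arch_simple by blast
    then have "x \<in> {- real n..real n}" by auto
    then show "x \<in> (\<Union>n::nat. {- real n..real n}) \<longleftrightarrow> x \<in> UNIV" by blast
  qed
  ultimately have "UNIV \<in> null_sets M" by simp
  moreover have "space M = UNIV" using sets_eq_imp_space_eq[OF S] by simp
  ultimately show False using prob_space.emeasure_space_1[OF P] by (simp add: null_sets_def)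
qed



locale mt_setup =
  fixes lam :: real and \<rho>0 :: "real measure"
  assumes lam: "lam \<ge> 0"
    and P0: "prob_space \<rho>0"
    and S0: "sets \<rho>0 = sets borel"
    and K0: "compact (msupp \<rho>0)"
    and sup0: "msupp \<rho>0 \<subseteq> {0..}"
    and mn0: "mean \<rho>0 \<noteq> 0"
begin

definition "x0 = Sup (msupp \<rho>0)"
definition "M t = (Aop lam ^^ t) \<rho>0"
definition "m t = mean (M t)"
definition "g = gfun lam"

lemma g0: "0 < g" and g1: "g \<le> 1" using gfun_pos gfun_le1 lam by (auto simp: g_def)

lemma bdd: "bdd_above (msupp \<rho>0)" using K0 by (simp add: compact_imp_bounded bounded_imp_bdd_above)

lemma x0_supp: "x0 \<in> msupp \<rho>0"
  unfolding x0_def using supp_nonempty[OF P0 S0] bdd K0 by (intro closed_contains_Sup) (auto simp: compact_imp_closed)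

lemma supp_sub: "msupp \<rho>0 \<subseteq> {0..x0}"
  using sup0 bdd by (auto simp: x0_def intro: cSup_upper)

lemma x0_nonneg: "0 \<le> x0" using x0_supp sup0 by auto

lemma AE0: "AE x in \<rho>0. 0 \<le> x \<and> x \<le> x0"
proof (rule AE_I')
  let ?K = "\<lambda>n::nat. {- real (Suc n)..- 1 / real (Suc n)} \<union> {x0 + 1 / real (Suc n)..x0 + real (Suc n)}"
  show "(\<Union>n. ?K n) \<in> null_sets \<rho>0"
  proof (rule null_sets_UN)
    fix n
    have p: "0 < 1 / real (Suc n)" by simp
    have "?K n \<inter> msupp \<rho>0 = {}"
    proof (rule ccontr)
      assume "?K n \<inter> msupp \<rho>0 \<noteq> {}"
      then obtain x where xk: "x \<in> ?K n" and xs: "x \<in> msupp \<rho>0" by blast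
      have "0 \<le> x \<and> x \<le> x0" using xs supp_sub by auto
      then show False using xk p by (simp only: Un_iff atLeastAtMost_iff) linarith
    qed
    moreover have "compact (?K n)" by (intro compact_Un compact_Icc)
    ultimately show "?K n \<in> null_sets \<rho>0" using null_compact[OF S0] by blast
  qed
  show "{x \<in> space \<rho>0. \<not> (0 \<le> x \<and> x \<le> x0)} \<subseteq> (\<Union>n. ?K n)"
  proof
    fix x assume "x \<in> {x \<in> space \<rho>0. \<not> (0 \<le> x \<and> x \<le> x0)}"
    then have x: "x < 0 \<or> x > x0" by auto
    define d where "d = (if x < 0 then - x else x - x0)"
    have d: "d > 0" using x by (auto simp: d_def)
    obtain n :: nat where n: "max d (1 / d) < real n" using reals_Archimedean2 by blast
    have a: "d \<le> real (Suc n)" using n by simp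
    have "1 / d < real (Suc n)" using n by simp
    then have "1 < d * real (Suc n)" using d by (simp add: divide_less_eq mult.commute)
    then have b: "1 / real (Suc n) \<le> d" by (simp add: divide_le_eq mult.commute)
    show "x \<in> (\<Union>n. ?K n)"
    proof (cases "x < 0")
      case True
      then have "x \<in> ?K n" using a b by (auto simp: d_def)
      then show ?thesis by blast
    next
      case False
      then have "x \<in> ?K n" using a b x by (auto simp: d_def)
      then show ?thesis by blast
    qed
  qed
qed

lemma mean0_pos: "mean \<rho>0 > 0"
proof -
  have "0 \<le> mean \<rho>0" unfolding mean_def using AE0 by (intro integral_nonneg_AE) auto
  then show ?thesis using mn0 by simp
qed

lemma M_Suc: "M (Suc t) = Aop lam (M t)" by (simp add: M_def)
lemma M_0: "M 0 = \<rho>0" by (simp add: M_def)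

lemma inv: "prob_space (M t) \<and> sets (M t) = sets borel \<and> (AE x in M t. 0 \<le> x \<and> x \<le> x0) \<and> mean \<rho>0 \<le> m t"
proof (induction t)
  case 0 then show ?case unfolding m_def M_0 using P0 S0 AE0 by simp
next
  case (Suc t)
  then have "0 < mean (M t)" using mean0_pos by (simp add: m_def)
  have a: "prob_space (M t)" "sets (M t) = sets borel" "AE x in M t. 0 \<le> x \<and> x \<le> x0" "mean \<rho>0 \<le> m t"
    using Suc by auto
  note st = step[of "M t" x0 lam, OF a(1-3) \<open>0 < mean (M t)\<close> gfun_pos[OF lam] gfun_le1[OF lam]]
  have "mean \<rho>0 \<le> m (Suc t)" using a(4) st(5) unfolding m_def M_Suc by linarith
  then show ?case using st(1,3,4) unfolding M_Suc by blast
qed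

lemma Pt: "prob_space (M t)" and St: "sets (M t) = sets borel"
  and AEt: "AE x in M t. 0 \<le> x \<and> x \<le> x0" and mt_ge: "mean \<rho>0 \<le> m t"
  using inv by auto

lemma mt_pos: "0 < m t" using mt_ge mean0_pos by (rule less_le_trans[rotated])

lemma space_t: "space (M t) = UNIV" using sets_eq_imp_space_eq[OF St] by simp

lemma intb: fixes B :: real shows "f \<in> borel_measurable borel \<Longrightarrow> (\<And>x. 0 \<le> x \<Longrightarrow> x \<le> x0 \<Longrightarrow> \<bar>f x\<bar> \<le> B) \<Longrightarrow> integrable (M t) f"
proof -
  assume f: "f \<in> borel_measurable borel" and B: "\<And>x. 0 \<le> x \<Longrightarrow> x \<le> x0 \<Longrightarrow> \<bar>f x\<bar> \<le> B"
  interpret prob_space "M t" by (rule Pt)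
  have meq: "measurable (M t) = measurable borel" by (rule ext, rule measurable_cong_sets[OF St refl])
  show ?thesis
  proof (rule integrable_const_bound[where B=B])
    show "AE x in M t. norm (f x) \<le> B" using AEt[of t]
    proof eventually_elim
      case (elim x) then show ?case using B by simp
    qed
    show "f \<in> borel_measurable (M t)" unfolding meq using f .
  qed
qed

lemma mt_le: "m t \<le> x0"
proof -
  interpret prob_space "M t" by (rule Pt)
  have "m t \<le> (\<integral>x. x0 \<partial>M t)" unfolding m_def mean_def
    by (rule integral_mono_AE) (use AEt in \<open>auto intro!: intb[where B=x0]\<close>)
  then show ?thesis by (simp add: prob_space)
qed

lemma x0_pos: "0 < x0" using mt_pos[of 0] mt_le[of 0] by simp

lemma mt_mono: "incseq m"
proof (rule incseq_SucI)
  fix t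
  have "0 < mean (M t)" using mt_pos by (simp add: m_def)
  from step(5)[of "M t" x0 lam, OF Pt St AEt this gfun_pos[OF lam] gfun_le1[OF lam]]
  show "m t \<le> m (Suc t)" by (simp add: m_def M_Suc)
qed

end


context mt_setup begin

definition "c t x = 1 - g + g * x / m t"

lemma c_bounds: "0 \<le> x \<Longrightarrow> x \<le> x0 \<Longrightarrow> 0 \<le> c t x \<and> c t x \<le> 1 + x0 / m t"
proof -
  assume x: "0 \<le> x" "x \<le> x0"
  have mp: "0 < m t" by (rule mt_pos)
  have a: "0 \<le> x / m t" "x / m t \<le> x0 / m t" using x mp by (auto simp: divide_right_mono)
  have b: "g * (x / m t) \<le> x / m t" by (rule mult_left_le_one_le[OF a(1)]) (use g0 g1 in auto)
  have "0 \<le> g * (x / m t)" using g0 a(1) by (intro mult_nonneg_nonneg) auto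
  moreover have "c t x = 1 - g + g * (x / m t)" by (simp add: c_def)
  ultimately show ?thesis using a b g1 g0 by linarith
qed

lemma meas_Suc:
  assumes S: "S \<in> sets borel"
  shows "measure (M (Suc t)) S = (\<integral>x. c t x * indicator S x \<partial>M t)"
proof -
  have "0 < mean (M t)" using mt_pos by (simp add: m_def)
  note st = step[of "M t" x0 lam, OF Pt St AEt this gfun_pos[OF lam] gfun_le1[OF lam]]
  have "integral\<^sup>L (M (Suc t)) (indicator S) = (\<integral>x. c t x * indicator S x \<partial>M t)"
    unfolding M_Suc using S by (subst st(2)) (auto simp: c_def g_def m_def)
  then show ?thesis using space_t[of "Suc t"] by simp
qed

lemma int_ci: "S \<in> sets borel \<Longrightarrow> integrable (M t) (\<lambda>x. c t x * indicator S x)"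
proof (rule intb[where B="1 + x0 / m t"])
  fix x :: real assume "0 \<le> x" "x \<le> x0"
  then have "0 \<le> c t x \<and> c t x \<le> 1 + x0 / m t" by (rule c_bounds)
  then show "\<bar>c t x * indicator S x\<bar> \<le> 1 + x0 / m t" by (auto simp: indicator_def)
qed (auto simp: c_def)

lemma int_ci': fixes q :: real shows "S \<in> sets borel \<Longrightarrow> integrable (M t) (\<lambda>x. q * indicator S x)"
  by (rule intb[where B="\<bar>q\<bar>"]) (auto simp: indicator_def)

lemma m_lim: "m \<longlonglongrightarrow> x0"
proof -
  have bd: "bdd_above (range m)" using mt_le by (intro bdd_aboveI[where M=x0]) auto
  define ms where "ms = (SUP t. m t)"
  have L: "m \<longlonglongrightarrow> ms" unfolding ms_def by (rule LIMSEQ_incseq_SUP[OF bd mt_mono])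
  have ms_le: "ms \<le> x0" unfolding ms_def using mt_le by (intro cSUP_least) auto
  have le_ms: "m t \<le> ms" for t unfolding ms_def by (rule cSUP_upper[OF UNIV_I bd])
  have "ms = x0"
  proof (rule ccontr)
    assume "ms \<noteq> x0"
    then have lt: "ms < x0" using ms_le by simp
    define \<delta> where "\<delta> = (x0 - ms) / 2"
    have \<delta>: "0 < \<delta>" using lt by (simp add: \<delta>_def)
    define S where "S = {x0 - \<delta>..}"
    define q where "q = 1 + g * \<delta> / x0"
    have q1: "1 < q" using g0 \<delta> x0_pos by (simp add: q_def)
    have SB: "S \<in> sets borel" by (simp add: S_def)
    have rec: "q * measure (M t) S \<le> measure (M (Suc t)) S" for t
    proof -
      have "q * measure (M t) S = (\<integral>x. q * indicator S x \<partial>M t)" using space_t[of t] by simp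
      also have "\<dots> \<le> (\<integral>x. c t x * indicator S x \<partial>M t)"
      proof (rule integral_mono_AE[OF int_ci'[OF SB] int_ci[OF SB]])
        show "AE x in M t. q * indicator S x \<le> c t x * indicator S x" using AEt[of t]
        proof eventually_elim
          case (elim x)
          show ?case
          proof (cases "x \<in> S")
            case True
            have mp: "0 < m t" by (rule mt_pos)
            have x1: "m t + \<delta> \<le> x"
            proof -
              have "x0 - \<delta> \<le> x" using True by (simp add: S_def)
              moreover have "ms + \<delta> = x0 - \<delta>" by (simp add: \<delta>_def field_simps)
              ultimately show ?thesis using le_ms[of t] by linarith
            qed
            have "m t * \<delta> / x0 \<le> \<delta>" using mt_le[of t] \<delta> x0_pos by (simp add: divide_le_eq mult_right_mono)
            then have "m t * (1 + \<delta> / x0) \<le> x" using x1 by (simp add: algebra_simps)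
            then have "1 + \<delta> / x0 \<le> x / m t" using mp by (simp add: le_divide_eq mult.commute)
            then have "g * (1 + \<delta> / x0) \<le> g * (x / m t)" by (rule mult_left_mono) (use g0 in auto)
            then have "q \<le> c t x" unfolding q_def c_def by (simp add: algebra_simps)
            then show ?thesis using True by simp
          qed simp
        qed
      qed
      also have "\<dots> = measure (M (Suc t)) S" by (rule meas_Suc[OF SB, symmetric])
      finally show ?thesis .
    qed
    have pow: "q ^ t * measure \<rho>0 S \<le> measure (M t) S" for t
    proof (induction t)
      case 0 then show ?case by (simp add: M_0)
    next
      case (Suc t)
      have "q ^ Suc t * measure \<rho>0 S = q * (q ^ t * measure \<rho>0 S)" by simp
      also have "\<dots> \<le> q * measure (M t) S" using Suc q1 by simp
      also have "\<dots> \<le> measure (M (Suc t)) S" by (rule rec)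
      finally show ?case .
    qed
    have "0 < emeasure \<rho>0 (ball x0 \<delta>)" using x0_supp \<delta> unfolding msupp_def by auto
    also have "\<dots> \<le> emeasure \<rho>0 S"
      by (rule emeasure_mono) (auto simp: S_def S0 dist_real_def)
    finally have "0 < emeasure \<rho>0 S" .
    then have mu: "0 < measure \<rho>0 S" using finite_measure.emeasure_eq_measure[OF prob_space.finite_measure[OF P0]] by simp
    obtain n where n: "1 / measure \<rho>0 S < q ^ n" using real_arch_pow[OF q1] by blast
    then have "1 < q ^ n * measure \<rho>0 S" using mu by (simp add: divide_less_eq)
    also have "\<dots> \<le> measure (M n) S" by (rule pow)
    also have "\<dots> \<le> 1" using prob_space.prob_le_1[OF Pt] by simp
    finally show False by simp
  qed
  then show ?thesis using L by simp
qed

lemma mass: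
  assumes e: "0 < \<epsilon>" "\<epsilon> \<le> x0"
  shows "(\<lambda>t. measure (M t) {..x0 - \<epsilon>}) \<longlonglongrightarrow> 0"
proof -
  define T where "T = {..x0 - \<epsilon>}"
  have TB: "T \<in> sets borel" by (simp add: T_def)
  have "eventually (\<lambda>t. x0 - \<epsilon> / 2 < m t) sequentially"
    using m_lim e by (intro order_tendstoD(1)) auto
  then obtain N where N: "\<And>t. t \<ge> N \<Longrightarrow> x0 - \<epsilon> / 2 < m t" by (auto simp: eventually_sequentially)
  define r where "r = 1 - g * \<epsilon> / (2 * x0)"
  have "g * \<epsilon> / (2 * x0) \<le> 1 / 2" using g0 g1 e x0_pos
  proof -
    have "g * \<epsilon> \<le> 1 * x0" using g0 g1 e by (intro mult_mono) auto
    then show ?thesis using x0_pos by (simp add: divide_le_eq)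
  qed
  moreover have "0 < g * \<epsilon> / (2 * x0)" using g0 e x0_pos by simp
  ultimately have r: "0 \<le> r" "r < 1" unfolding r_def by linarith+
  have rec: "measure (M (Suc t)) T \<le> r * measure (M t) T" if t: "t \<ge> N" for t
  proof -
    have "measure (M (Suc t)) T = (\<integral>x. c t x * indicator T x \<partial>M t)" by (rule meas_Suc[OF TB])
    also have "\<dots> \<le> (\<integral>x. r * indicator T x \<partial>M t)"
    proof (rule integral_mono_AE[OF int_ci[OF TB] int_ci'[OF TB]])
      show "AE x in M t. c t x * indicator T x \<le> r * indicator T x" using AEt[of t]
      proof eventually_elim
        case (elim x)
        show ?case
        proof (cases "x \<in> T")
          case True
          have mp: "0 < m t" by (rule mt_pos)
          have x1: "x \<le> m t - \<epsilon> / 2" using True N[OF t] by (simp add: T_def)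
          have "m t * \<epsilon> / (2 * x0) \<le> \<epsilon> / 2" using mt_le[of t] e x0_pos
            by (simp add: divide_le_eq mult_right_mono)
          then have "x \<le> m t * (1 - \<epsilon> / (2 * x0))" using x1 by (simp add: algebra_simps)
          then have "x / m t \<le> 1 - \<epsilon> / (2 * x0)" using mp by (simp add: divide_le_eq mult.commute)
          then have "g * (x / m t) \<le> g * (1 - \<epsilon> / (2 * x0))" by (rule mult_left_mono) (use g0 in auto)
          then have "c t x \<le> r" unfolding r_def c_def by (simp add: algebra_simps)
          then show ?thesis using True by simp
        qed simp
      qed
    qed
    also have "\<dots> = r * measure (M t) T" using space_t[of t] by simp
    finally show ?thesis .
  qed
  have pow: "measure (M (k + N)) T \<le> r ^ k" for k
  proof (induction k)
    case 0 then show ?case using prob_space.prob_le_1[OF Pt] by simp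
  next
    case (Suc k)
    have "measure (M (Suc k + N)) T \<le> r * measure (M (k + N)) T" using rec[of "k + N"] by simp
    also have "\<dots> \<le> r * r ^ k" using Suc r by (simp add: mult_left_mono)
    finally show ?case by simp
  qed
  have "(\<lambda>k. measure (M (k + N)) T) \<longlonglongrightarrow> 0"
  proof (rule tendsto_sandwich[of "\<lambda>_. 0" _ _ "\<lambda>k. r ^ k"])
    show "(\<lambda>k. r ^ k) \<longlonglongrightarrow> 0" using r by (intro LIMSEQ_power_zero) simp
  qed (use pow in auto)
  then show ?thesis unfolding T_def by (rule LIMSEQ_offset)
qed

end


context mt_setup begin

lemma int_affine:
  fixes a b :: real
  assumes that: "T \<in> sets borel"
  shows "(\<integral>x. a + b * indicator T x \<partial>M t) = a + b * measure (M t) T" "integrable (M t) (\<lambda>x. a + b * indicator T x)"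
proof -
  interpret prob_space "M t" by (rule Pt)
  have i1: "integrable (M t) (\<lambda>x. b * indicator T x)" using that by (intro int_ci')
  show "integrable (M t) (\<lambda>x. a + b * indicator T x)" using i1 by simp
  show "(\<integral>x. a + b * indicator T x \<partial>M t) = a + b * measure (M t) T"
  proof -
    have p1: "prob UNIV = 1" using prob_space space_t[of t] by simp
    show ?thesis
    using Bochner_Integration.integral_add[of "M t" "\<lambda>x. a" "\<lambda>x. b * indicator T x"] i1 space_t[of t] p1
    by simp
  qed
qed

lemma final:
  fixes \<phi> :: "real \<Rightarrow> real"
  assumes cont: "continuous_on UNIV \<phi>"
  shows "(\<lambda>t. \<integral>x. \<phi> x \<partial>M t) \<longlonglongrightarrow> \<phi> x0"
proof (rule LIMSEQ_I)
  fix \<eta> :: real assume \<eta>: "0 < \<eta>"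
  have fm: "\<phi> \<in> borel_measurable borel" using cont by (rule borel_measurable_continuous_onI)
  have "compact (\<phi> ` {0..x0})"
    by (rule compact_continuous_image) (use cont in \<open>auto intro: continuous_on_subset\<close>)
  then obtain B where B: "\<And>x. x \<in> {0..x0} \<Longrightarrow> \<bar>\<phi> x\<bar> \<le> B"
    using compact_imp_bounded[of "\<phi> ` {0..x0}"] unfolding bounded_iff by (metis image_eqI real_norm_def)
  have B0: "0 \<le> B" using B[of x0] x0_pos by force
  obtain \<delta> where \<delta>: "\<delta> > 0" and d: "\<And>x'. dist x' x0 < \<delta> \<Longrightarrow> dist (\<phi> x') (\<phi> x0) < \<eta> / 2"
    using cont \<eta> unfolding continuous_on_iff by (metis UNIV_I half_gt_zero)
  define \<epsilon> where "\<epsilon> = min (\<delta> / 2) x0"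
  have e: "0 < \<epsilon>" "\<epsilon> \<le> x0" using \<delta> x0_pos by (auto simp: \<epsilon>_def)
  define T where "T = {..x0 - \<epsilon>}"
  have TB: "T \<in> sets borel" by (simp add: T_def)
  have "eventually (\<lambda>t. measure (M t) T < \<eta> / (4 * (B + 1))) sequentially"
    using mass[OF e] \<eta> B0 unfolding T_def by (intro order_tendstoD(2)) auto
  then obtain N where N: "\<And>t. t \<ge> N \<Longrightarrow> measure (M t) T < \<eta> / (4 * (B + 1))"
    by (auto simp: eventually_sequentially)
  show "\<exists>no. \<forall>n\<ge>no. norm ((\<integral>x. \<phi> x \<partial>M n) - \<phi> x0) < \<eta>"
  proof (intro exI allI impI)
    fix n assume n: "N \<le> n"
    have ip: "integrable (M n) \<phi>" by (rule intb[OF fm, where B=B]) (use B in auto)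
    have pt: "\<bar>\<phi> x - \<phi> x0\<bar> \<le> \<eta> / 2 + 2 * B * indicator T x" if x: "0 \<le> x" "x \<le> x0" for x
    proof (cases "x \<in> T")
      case True
      have "\<bar>\<phi> x - \<phi> x0\<bar> \<le> 2 * B" using B[of x] B[of x0] x x0_pos by auto
      then show ?thesis using True \<eta> by simp
    next
      case False
      then have "x0 - \<epsilon> < x" by (simp add: T_def)
      then have "dist x x0 < \<delta>" using x \<delta> by (simp add: dist_real_def \<epsilon>_def)
      then have "\<bar>\<phi> x - \<phi> x0\<bar> < \<eta> / 2" using d by (simp add: dist_real_def)
      then show ?thesis using False by simp
    qed
    have i1: "(\<integral>x. \<phi> x \<partial>M n) \<le> \<phi> x0 + \<eta> / 2 + 2 * B * measure (M n) T"
    proof -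
      have "(\<integral>x. \<phi> x \<partial>M n) \<le> (\<integral>x. (\<phi> x0 + \<eta> / 2) + 2 * B * indicator T x \<partial>M n)"
      proof (rule integral_mono_AE[OF ip int_affine(2)[OF TB]])
        show "AE x in M n. \<phi> x \<le> \<phi> x0 + \<eta> / 2 + 2 * B * indicator T x" using AEt[of n]
          by eventually_elim (use pt in fastforce)
      qed
      then show ?thesis using int_affine(1)[OF TB] by simp
    qed
    have i2: "\<phi> x0 - \<eta> / 2 - 2 * B * measure (M n) T \<le> (\<integral>x. \<phi> x \<partial>M n)"
    proof -
      have "(\<integral>x. (\<phi> x0 - \<eta> / 2) + (- 2 * B) * indicator T x \<partial>M n) \<le> (\<integral>x. \<phi> x \<partial>M n)"
      proof (rule integral_mono_AE[OF int_affine(2)[OF TB] ip])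
        show "AE x in M n. (\<phi> x0 - \<eta> / 2) + (- 2 * B) * indicator T x \<le> \<phi> x" using AEt[of n]
          by eventually_elim (use pt in fastforce)
      qed
      then show ?thesis using int_affine(1)[OF TB, of n "\<phi> x0 - \<eta> / 2" "- 2 * B"] by simp
    qed
    have "2 * B * measure (M n) T \<le> 2 * B * (\<eta> / (4 * (B + 1)))"
      using N[OF n] B0 by (intro mult_left_mono) auto
    also have "\<dots> < \<eta> / 2" using B0 \<eta> by (simp add: field_simps)
    finally have "2 * B * measure (M n) T < \<eta> / 2" .
    then show "norm ((\<integral>x. \<phi> x \<partial>M n) - \<phi> x0) < \<eta>" using i1 i2 by simp
  qed
qed

end

theorem mainTheorem3:
  fixes lam :: real and \<rho>0 :: "real measure"
  assumes "lam \<ge> 0"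
    and "prob_space \<rho>0"
    and "sets \<rho>0 = sets borel"
    and "compact (msupp \<rho>0)"
    and "msupp \<rho>0 \<subseteq> {0..}"
    and "mean \<rho>0 \<noteq> 0"
  shows "\<forall>\<phi> :: real \<Rightarrow> real. continuous_on UNIV \<phi> \<and> (\<exists>K. compact K \<and> (\<forall>x. x \<notin> K \<longrightarrow> \<phi> x = 0)) \<longrightarrow>
           (\<lambda>t. \<integral>x. \<phi> x \<partial>((Aop lam ^^ t) \<rho>0)) \<longlonglongrightarrow> \<phi> (Sup (msupp \<rho>0))"
proof -
  interpret mt_setup lam \<rho>0 by (rule mt_setup.intro[OF assms])
  show ?thesis using final unfolding M_def x0_def by blast
qed


end
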